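(* Let $(\Omega,\mathcal F,\mathbb P)$ be a probability space, $M$ a one-dimensional compact manifold (interval or circle), $I\subset(-1,1)$ an open interval containing $0$, and for $\omega\in\Omega$, $\epsilon\in I$ let $T_{\omega,\epsilon}\colon M\to M$ be $C^2$ (on their branches) with $|T'_{\omega,\epsilon}|\ge\gamma_\omega>0$; write $T_\omega=T_{\omega,0}$. Let $\mathcal L_{\omega,\epsilon}g(x)=\sum_{T_{\omega,\epsilon}y=x}g(y)/|T'_{\omega,\epsilon}(y)|$, $\mathcal L_\omega=\mathcal L_{\omega,0}$, and let $E(\omega)$ be a random variable with $\|\mathcal L_{\omega,\epsilon}\mathbf 1\|_\infty\le E(\omega)$ for all $\epsilon\in I$. Assume there is a random variable $q(\omega)$ with $d_{C^1}(T_{\omega,\epsilon},T_\omega)\le q(\omega)|\epsilon|$, and that for every $x\in M$ the preimages $y_{i,\omega}(x)$ of $x$ under $T_\omega$ and $y_{\epsilon,i,\omega}(x)$ under $T_{\omega,\epsilon}$ can be paired (indexed by the same $i$) so that $\|y_{\epsilon,i,\omega}-y_{i,\omega}\|_\infty\le q(\omega)|\epsilon|$ for all $i$. Then for $\mathbb P$-a.e. $\omega$, every $g\in C^1(M)$ and every $\epsilon\in I$, $$\|(\mathcal L_{\omega,\epsilon}-\mathcal L_\omega)g\|_\infty\le|\epsilon|\,\bar q(\omega)\|g\|_{C^1},\qquad \bar q(\omega):=E(\omega)q(\omega)\big(1+\gamma_\omega^{-1}+\gamma_\omega^{-1}\|T''_\omega\|_\infty\big).$$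
   Context: $d_{C^1}$ denotes the $C^1$ distance between maps. *)

theory Defs
  imports "HOL-Probability.Probability"
begin

text \<open>The one-dimensional compact manifold M: either the interval [a,b]
  (circ = False) or the circle R/Z, represented by the fundamental domain [0,1)
  (circ = True, and then a = 0, b = 1).\<close>

definition Mset :: "bool \<Rightarrow> real \<Rightarrow> real \<Rightarrow> real set" where
  "Mset circ a b = (if circ then {0..<1} else {a..b})"

definition projM :: "bool \<Rightarrow> real \<Rightarrow> real" where
  "projM circ t = (if circ then frac t else t)"

definition distM :: "bool \<Rightarrow> real \<Rightarrow> real \<Rightarrow> real" where
  "distM circ u v = (if circ then min (frac (u - v)) (1 - frac (u - v)) else \<bar>u - v\<bar>)"

definition supM :: "real set \<Rightarrow> (real \<Rightarrow> real) \<Rightarrow> real" where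
  "supM M f = (SUP x\<in>M. \<bar>f x\<bar>)"

definition C1_fun :: "bool \<Rightarrow> real \<Rightarrow> real \<Rightarrow> (real \<Rightarrow> real) \<Rightarrow> (real \<Rightarrow> real) \<Rightarrow> bool" where
  "C1_fun circ a b g g' \<longleftrightarrow>
     (if circ then (\<forall>x. g (x + 1) = g x) \<and> (\<forall>x. (g has_real_derivative g' x) (at x))
                   \<and> continuous_on UNIV g'
      else (\<forall>x\<in>{a..b}. (g has_real_derivative g' x) (at x within {a..b}))
                   \<and> continuous_on {a..b} g')"

definition C1_norm :: "real set \<Rightarrow> (real \<Rightarrow> real) \<Rightarrow> (real \<Rightarrow> real) \<Rightarrow> real" where
  "C1_norm M g g' = supM M g + supM M g'"

text \<open>Branch partition a = c 0 < c 1 < ... < c N = b; branch k is [c k, c (k+1))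
  (the last branch also contains b in the interval case).\<close>
definition partition_of :: "nat \<Rightarrow> (nat \<Rightarrow> real) \<Rightarrow> real \<Rightarrow> real \<Rightarrow> bool" where
  "partition_of N c a b \<longleftrightarrow> N \<ge> 1 \<and> c 0 = a \<and> c N = b \<and> (\<forall>k<N. c k < c (Suc k))"

definition bidx :: "nat \<Rightarrow> (nat \<Rightarrow> real) \<Rightarrow> real \<Rightarrow> nat" where
  "bidx N c y = (if \<exists>k<N. c k \<le> y \<and> y < c (Suc k)
                 then (THE k. k < N \<and> c k \<le> y \<and> y < c (Suc k)) else N - 1)"

definition glue :: "nat \<Rightarrow> (nat \<Rightarrow> real) \<Rightarrow> (nat \<Rightarrow> real \<Rightarrow> real) \<Rightarrow> real \<Rightarrow> real" where
  "glue N c F y = F (bidx N c y) y"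

definition branches_C2 :: "nat \<Rightarrow> (nat \<Rightarrow> real) \<Rightarrow> (nat \<Rightarrow> real \<Rightarrow> real)
    \<Rightarrow> (nat \<Rightarrow> real \<Rightarrow> real) \<Rightarrow> (nat \<Rightarrow> real \<Rightarrow> real) \<Rightarrow> bool" where
  "branches_C2 N c F F' F'' \<longleftrightarrow>
     (\<forall>k<N. (\<forall>y\<in>{c k..c (Suc k)}.
                (F k has_real_derivative F' k y) (at y within {c k..c (Suc k)}) \<and>
                (F' k has_real_derivative F'' k y) (at y within {c k..c (Suc k)}))
            \<and> continuous_on {c k..c (Suc k)} (F'' k))"

definition transfer_op :: "real set \<Rightarrow> (real \<Rightarrow> real) \<Rightarrow> (real \<Rightarrow> real) \<Rightarrow> (real \<Rightarrow> real) \<Rightarrow> real \<Rightarrow> real" where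
  "transfer_op M T T' g x = (\<Sum>y\<in>{y\<in>M. T y = x}. g y / \<bar>T' y\<bar>)"

definition dC1 :: "bool \<Rightarrow> real set \<Rightarrow> (real \<Rightarrow> real) \<Rightarrow> (real \<Rightarrow> real)
    \<Rightarrow> (real \<Rightarrow> real) \<Rightarrow> (real \<Rightarrow> real) \<Rightarrow> real" where
  "dC1 circ M S S' T T' = (SUP y\<in>M. distM circ (S y) (T y)) + (SUP y\<in>M. \<bar>S' y - T' y\<bar>)"

end

theory Submission
  imports Defs
begin

lemma part_mono_less:
  assumes "partition_of N c a b" "i < j" "j \<le> N"
  shows "c i < c j"
  using assms(2,3)
proof (induction j)
  case 0 then show ?case by simp
next
  case (Suc j)
  have s: "c j < c (Suc j)" using assms(1) Suc.prems unfolding partition_of_def by auto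
  show ?case
  proof (cases "i = j")
    case True then show ?thesis using s by simp
  next
    case False
    then have "c i < c j" using Suc by auto
    then show ?thesis using s by simp
  qed
qed

lemma part_mono_le:
  assumes "partition_of N c a b" "i \<le> j" "j \<le> N"
  shows "c i \<le> c j"
  using part_mono_less[OF assms(1)] assms(2,3) by (cases "i = j") (auto simp: less_imp_le)

lemma bidx_eq:
  assumes p: "partition_of N c a b" and k: "k < N" "c k \<le> y" "y < c (Suc k)"
  shows "bidx N c y = k"
proof -
  have uniq: "k' = k" if "k' < N" "c k' \<le> y" "y < c (Suc k')" for k'
  proof (rule ccontr)
    assume "k' \<noteq> k"
    then consider "k < k'" | "k' < k" by linarith
    then show False
    proof cases
      case 1
      then have "c (Suc k) \<le> c k'" using part_mono_le[OF p, of "Suc k" k'] that by simp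
      then show False using k(3) that(2) by simp
    next
      case 2
      then have "c (Suc k') \<le> c k" using part_mono_le[OF p, of "Suc k'" k] k by simp
      then show False using k(2) that(3) by simp
    qed
  qed
  have ex: "\<exists>k<N. c k \<le> y \<and> y < c (Suc k)" using k by blast
  have "(THE k. k < N \<and> c k \<le> y \<and> y < c (Suc k)) = k"
  proof (rule the_equality)
    show "k < N \<and> c k \<le> y \<and> y < c (Suc k)" using k by simp
    show "k' = k" if "k' < N \<and> c k' \<le> y \<and> y < c (Suc k')" for k'
      using uniq that by blast
  qed
  then show ?thesis unfolding bidx_def using ex by simp
qed

lemma bidx_exists:
  assumes p: "partition_of N c a b" and y: "a \<le> y" "y < b"
  shows "\<exists>k<N. c k \<le> y \<and> y < c (Suc k)"
proof -
  have "\<forall>y. c 0 \<le> y \<and> y < c n \<and> n \<le> N \<longrightarrow> (\<exists>k<n. c k \<le> y \<and> y < c (Suc k))" for n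
  proof (induction n)
    case 0 then show ?case by auto
  next
    case (Suc n)
    show ?case
    proof (intro allI impI)
      fix y assume h: "c 0 \<le> y \<and> y < c (Suc n) \<and> Suc n \<le> N"
      show "\<exists>k<Suc n. c k \<le> y \<and> y < c (Suc k)"
      proof (cases "y < c n")
        case True
        then obtain k where "k < n" "c k \<le> y" "y < c (Suc k)" using Suc.IH[rule_format, of y] h by auto
        then show ?thesis by (intro exI[of _ k]) auto
      next
        case False then show ?thesis using h by (intro exI[of _ n]) auto
      qed
    qed
  qed
  note h = this[of N, rule_format, of y]
  have "c 0 \<le> y" "y < c N" using p y unfolding partition_of_def by auto
  then show ?thesis using h by blast
qed

lemma bidx_props:
  assumes p: "partition_of N c a b" and y: "a \<le> y" "y \<le> b"
  shows "bidx N c y < N" "c (bidx N c y) \<le> y" "y \<le> c (Suc (bidx N c y))"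
    "y < b \<Longrightarrow> y < c (Suc (bidx N c y))"
proof -
  have N1: "N \<ge> 1" "c 0 = a" "c N = b" using p unfolding partition_of_def by auto
  have "bidx N c y < N \<and> c (bidx N c y) \<le> y \<and> y \<le> c (Suc (bidx N c y)) \<and>
     (y < b \<longrightarrow> y < c (Suc (bidx N c y)))"
  proof (cases "y < b")
    case True
    then obtain k where k: "k<N" "c k \<le> y" "y < c (Suc k)" using bidx_exists[OF p] y by blast
    then show ?thesis using bidx_eq[OF p k] by simp
  next
    case False
    then have yb: "y = b" using y by simp
    have nex: "\<not> (\<exists>k<N. c k \<le> y \<and> y < c (Suc k))"
    proof
      assume "\<exists>k<N. c k \<le> y \<and> y < c (Suc k)"
      then obtain k where "k < N" "y < c (Suc k)" by blast
      moreover have "c (Suc k) \<le> c N" using part_mono_le[OF p, of "Suc k" N] \<open>k < N\<close> by simp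
      ultimately show False using yb N1 by simp
    qed
    then have "bidx N c y = N - 1" by (subst bidx_def) (rule if_not_P[OF nex])
    moreover have "c (N - 1) \<le> c N" using part_mono_le[OF p, of "N - 1" N] by simp
    ultimately show ?thesis using N1 yb by simp
  qed
  then show "bidx N c y < N" "c (bidx N c y) \<le> y" "y \<le> c (Suc (bidx N c y))"
    "y < b \<Longrightarrow> y < c (Suc (bidx N c y))" by auto
qed

lemma bidx_between:
  assumes p: "partition_of N c a b" and yz: "a \<le> y" "y \<le> b" "a \<le> z" "z \<le> b"
    and k: "bidx N c y = k" "bidx N c z = k"
    and t: "min y z \<le> t" "t \<le> max y z"
  shows "bidx N c t = k" "c k \<le> t" "t \<le> c (Suc k)"
proof -
  note py = bidx_props[OF p yz(1,2)] and pz = bidx_props[OF p yz(3,4)]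
  show t1: "c k \<le> t" "t \<le> c (Suc k)" using py pz k t by (auto simp: min_def max_def split: if_splits)
  show "bidx N c t = k"
  proof (cases "t < c (Suc k)")
    case True then show ?thesis using bidx_eq[OF p _ t1(1)] py k by auto
  next
    case False
    then have tc: "t = c (Suc k)" using t1 by simp
    then have "max y z = c (Suc k)" using t py pz k by (auto simp: max_def split: if_splits)
    then have "y = c (Suc k) \<or> z = c (Suc k)" by (auto simp: max_def split: if_splits)
    then have "y = b \<or> z = b" using py pz k yz by force
    then show ?thesis using tc k yz \<open>max y z = c (Suc k)\<close>
      by (auto simp: max_def split: if_splits)
  qed
qed

lemma supM_upper:
  assumes "bounded (f ` M)" "x \<in> M"
  shows "\<bar>f x\<bar> \<le> supM M f"
proof -
  obtain B where B: "\<forall>y\<in>f ` M. norm y \<le> B" using assms(1) bounded_iff by blast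
  have "bdd_above ((\<lambda>x. \<bar>f x\<bar>) ` M)" using B by (intro bdd_aboveI[of _ B]) auto
  then show ?thesis unfolding supM_def using assms(2) by (rule cSUP_upper2) simp
qed

lemma supM_nonneg:
  assumes "bounded (f ` M)" "M \<noteq> {}"
  shows "0 \<le> supM M f"
proof -
  obtain x where "x \<in> M" using assms(2) by blast
  then show ?thesis using supM_upper[OF assms(1)] by (meson abs_ge_zero order_trans)
qed

lemma supM_least:
  assumes "M \<noteq> {}" "\<And>x. x \<in> M \<Longrightarrow> \<bar>f x\<bar> \<le> B"
  shows "supM M f \<le> B"
  unfolding supM_def using assms by (intro cSUP_least) auto

lemma Mset_facts:
  assumes "a < b" "circ \<longrightarrow> a = 0 \<and> b = 1"
  shows "{a..<b} \<subseteq> Mset circ a b" "Mset circ a b \<subseteq> {a..b}" "convex (Mset circ a b)"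
    "Mset circ a b \<noteq> {}"
  using assms by (auto simp: Mset_def)

lemma glue_bounded:
  assumes p: "partition_of N c a b" and M: "M \<subseteq> {a..b}"
    and cont: "\<forall>k<N. continuous_on {c k..c (Suc k)} (F k)"
  shows "bounded (glue N c F ` M)"
proof -
  have "glue N c F ` M \<subseteq> (\<Union>k\<in>{..<N}. F k ` {c k..c (Suc k)})"
  proof
    fix u assume "u \<in> glue N c F ` M"
    then obtain y where y: "y \<in> M" "u = glue N c F y" by blast
    then have "a \<le> y" "y \<le> b" using M by auto
    note bp = bidx_props[OF p this]
    show "u \<in> (\<Union>k\<in>{..<N}. F k ` {c k..c (Suc k)})"
      using bp y unfolding glue_def by (auto intro!: bexI[of _ "bidx N c y"])
  qed
  moreover have "bounded (\<Union>k\<in>{..<N}. F k ` {c k..c (Suc k)})"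
    using cont by (intro bounded_UN) (auto intro!: compact_imp_bounded compact_continuous_image)
  ultimately show ?thesis using bounded_subset by blast
qed

lemma branch_inj:
  assumes p: "partition_of N c a b" and k: "k < N"
    and der: "\<forall>y\<in>{c k..c (Suc k)}. (F has_real_derivative F' y) (at y within {c k..c (Suc k)})"
    and nz: "\<And>y. c k < y \<Longrightarrow> y < c (Suc k) \<Longrightarrow> F' y \<noteq> 0"
  shows "inj_on F {c k..c (Suc k)}"
proof -
  have main: "F u \<noteq> F v" if uv: "c k \<le> u" "u < v" "v \<le> c (Suc k)" for u v
  proof -
    have "\<exists>x\<in>{u<..<v}. F v - F u = F' x * (v - u)"
    proof (rule mvt_simple[OF uv(2), where f' = "\<lambda>x h. F' x * h", simplified])
      fix x assume xu: "u \<le> x" "x \<le> v"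
      have xin: "x \<in> {c k..c (Suc k)}" using xu uv by simp
      have sub: "{u..v} \<subseteq> {c k..c (Suc k)}" using uv by simp
      have "(F has_real_derivative F' x) (at x within {u..v})"
        using DERIV_subset[OF der[rule_format, OF xin] sub] .
      then show "(F has_derivative (\<lambda>h. F' x * h)) (at x within {u..v})"
        by (rule has_field_derivative_imp_has_derivative)
    qed
    then obtain x where x: "u < x" "x < v" "F v - F u = F' x * (v - u)" by auto
    have "c k < x" "x < c (Suc k)" using x uv by linarith+
    then have "F' x \<noteq> 0" using nz by blast
    moreover have "v - u \<noteq> 0" using uv by simp
    ultimately have "F v - F u \<noteq> 0" using x(3) by simp
    then show ?thesis by simp
  qed
  show ?thesis
  proof (rule inj_onI)
    fix u v assume uv: "u \<in> {c k..c (Suc k)}" "v \<in> {c k..c (Suc k)}" "F u = F v"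
    then show "u = v"
    proof (cases u v rule: linorder_cases)
      case less then show ?thesis using main[of u v] uv by auto
    next
      case greater then show ?thesis using main[of v u] uv by auto
    qed
  qed
qed

lemma preimage_card:
  assumes p: "partition_of N c a b" and M: "M \<subseteq> {a..b}"
    and cont: "\<forall>k<N. continuous_on {c k..c (Suc k)} (F k)"
    and inj: "\<forall>k<N. inj_on (F k) {c k..c (Suc k)}"
  shows "\<exists>B. \<forall>x. finite {y\<in>M. projM circ (glue N c F y) = x}
           \<and> card {y\<in>M. projM circ (glue N c F y) = x} \<le> B"
proof -
  obtain R where R: "\<forall>u\<in>glue N c F ` M. norm u \<le> R"
    using glue_bounded[OF p M cont] bounded_iff by blast
  define Z where "Z = {..<N} \<times> {- \<lceil>R\<rceil> - 1 .. \<lceil>R\<rceil> + 1}"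
  have fZ: "finite Z" unfolding Z_def by simp
  define h where "h = (\<lambda>y. (bidx N c y, \<lfloor>glue N c F y\<rfloor>))"
  have "finite {y\<in>M. projM circ (glue N c F y) = x}
           \<and> card {y\<in>M. projM circ (glue N c F y) = x} \<le> card Z" for x
  proof -
    let ?A = "{y\<in>M. projM circ (glue N c F y) = x}"
    have injh: "inj_on h ?A"
    proof (rule inj_onI)
      fix y1 y2 assume y1: "y1 \<in> ?A" and y2: "y2 \<in> ?A" and e: "h y1 = h y2"
      define k where "k = bidx N c y1"
      have k2: "bidx N c y2 = k" using e unfolding h_def k_def by simp
      have fl: "\<lfloor>F k y1\<rfloor> = \<lfloor>F k y2\<rfloor>" using e k2 unfolding h_def k_def glue_def by simp
      have pr: "projM circ (F k y1) = projM circ (F k y2)"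
        using y1 y2 k2 unfolding k_def glue_def by simp
      have eq: "F k y1 = F k y2"
      proof (cases circ)
        case True
        then show ?thesis using pr fl unfolding projM_def frac_def by simp
      next
        case False
        then show ?thesis using pr unfolding projM_def by simp
      qed
      have ab: "a \<le> y1" "y1 \<le> b" "a \<le> y2" "y2 \<le> b" using y1 y2 M by auto
      note b1 = bidx_props[OF p ab(1,2)] and b2 = bidx_props[OF p ab(3,4)]
      have "y1 \<in> {c k..c (Suc k)}" "y2 \<in> {c k..c (Suc k)}" "k < N"
        using b1 b2 k2 unfolding k_def by auto
      then show "y1 = y2" using inj eq inj_onD by metis
    qed
    have sub: "h ` ?A \<subseteq> Z"
    proof
      fix u assume "u \<in> h ` ?A"
      then obtain y where y: "y \<in> M" "u = h y" by auto
      have ab: "a \<le> y" "y \<le> b" using y M by auto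
      have "\<bar>glue N c F y\<bar> \<le> R" using R y by auto
      then have "\<lfloor>glue N c F y\<rfloor> \<le> \<lceil>R\<rceil> + 1" "- \<lceil>R\<rceil> - 1 \<le> \<lfloor>glue N c F y\<rfloor>"
        by linarith+
      then show "u \<in> Z" using bidx_props(1)[OF p ab] y unfolding Z_def h_def by auto
    qed
    have "finite ?A" using finite_imageD[OF finite_subset[OF sub fZ] injh] .
    moreover have "card ?A \<le> card Z" using card_inj_on_le[OF injh sub fZ] .
    ultimately show ?thesis by blast
  qed
  then show ?thesis by blast
qed

lemma C1_facts:
  assumes g: "C1_fun circ a b g g'" and ab: "a < b" and cc: "circ \<longrightarrow> a = 0 \<and> b = 1"
  shows "bounded (g ` Mset circ a b)" "bounded (g' ` Mset circ a b)"
    "\<And>u v. u \<in> Mset circ a b \<Longrightarrow> v \<in> Mset circ a b \<Longrightarrow>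
        \<bar>g u - g v\<bar> \<le> supM (Mset circ a b) g' * \<bar>u - v\<bar>"
proof -
  let ?M = "Mset circ a b"
  note Mf = Mset_facts[OF ab cc]
  have der: "\<forall>x\<in>?M. (g has_real_derivative g' x) (at x within ?M)"
    and cg: "continuous_on {a..b} g" and cg': "continuous_on {a..b} g'"
  proof -
    have "(\<forall>x\<in>?M. (g has_real_derivative g' x) (at x within ?M)) \<and> continuous_on {a..b} g
       \<and> continuous_on {a..b} g'"
    proof (cases circ)
      case True
      then have d: "\<And>x. (g has_real_derivative g' x) (at x)" and c': "continuous_on UNIV g'"
        using g unfolding C1_fun_def by auto
      have "continuous_on UNIV g" by (rule DERIV_continuous_on[of UNIV g g']) (use d in simp)
      then have "continuous_on {a..b} g" by (rule continuous_on_subset) simp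
      moreover have "continuous_on {a..b} g'" using c' by (rule continuous_on_subset) simp
      moreover have "\<forall>x\<in>?M. (g has_real_derivative g' x) (at x within ?M)"
        using d has_field_derivative_at_within by blast
      ultimately show ?thesis by blast
    next
      case False
      then have d: "\<forall>x\<in>{a..b}. (g has_real_derivative g' x) (at x within {a..b})"
        and c': "continuous_on {a..b} g'" using g unfolding C1_fun_def by auto
      have "continuous_on {a..b} g" by (rule DERIV_continuous_on[of "{a..b}" g g']) (use d in simp)
      moreover have "?M = {a..b}" using False unfolding Mset_def by simp
      ultimately show ?thesis using d c' by simp
    qed
    then show "\<forall>x\<in>?M. (g has_real_derivative g' x) (at x within ?M)" "continuous_on {a..b} g"
      "continuous_on {a..b} g'" by auto
  qed
  have bg: "bounded (g ` {a..b})" using cg by (intro compact_imp_bounded compact_continuous_image) auto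
  have bg': "bounded (g' ` {a..b})" using cg' by (intro compact_imp_bounded compact_continuous_image) auto
  show b1: "bounded (g ` ?M)" using bg Mf(2) bounded_subset image_mono by metis
  show b2: "bounded (g' ` ?M)" using bg' Mf(2) bounded_subset image_mono by metis
  fix u v assume u: "u \<in> ?M" and v: "v \<in> ?M"
  have "norm (g u - g v) \<le> supM ?M g' * norm (u - v)"
  proof (rule field_differentiable_bound[OF Mf(3)])
    show "(g has_field_derivative g' z) (at z within ?M)" if "z \<in> ?M" for z
      using der that by blast
    show "norm (g' z) \<le> supM ?M g'" if "z \<in> ?M" for z
      using supM_upper[OF b2 that] by simp
  qed (use u v in auto)
  then show "\<bar>g u - g v\<bar> \<le> supM ?M g' * \<bar>u - v\<bar>" by simp
qed

lemma term_est0: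
  fixes gz gy a b G0 G1 D d \<gamma> :: real
  assumes g: "\<gamma> > 0" and A: "a \<ge> \<gamma>" and B: "b \<ge> \<gamma>"
    and h1: "\<bar>gz - gy\<bar> \<le> G1 * d" and h2: "\<bar>gy\<bar> \<le> G0" and h3: "\<bar>b - a\<bar> \<le> D * d"
    and d: "d \<ge> 0" and D: "D \<ge> 0" and G0: "G0 \<ge> 0"
  shows "\<bar>gz / a - gy / b\<bar> \<le> (1 / a) * (d * (G1 + G0 * D / \<gamma>))"
proof -
  have Ap: "a > 0" and Bp: "b > 0" using g A B by linarith+
  have eq: "gz / a - gy / b = (gz - gy) / a + gy * (b - a) / (a * b)"
    using Ap Bp by (simp add: field_simps)
  have t1: "\<bar>(gz - gy) / a\<bar> \<le> G1 * d / a"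
    using h1 Ap by (simp add: divide_right_mono)
  have n: "\<bar>gy * (b - a)\<bar> \<le> G0 * (D * d)"
    unfolding abs_mult by (rule mult_mono[OF h2 h3 G0 abs_ge_zero])
  have "\<bar>gy * (b - a) / (a * b)\<bar> = \<bar>gy * (b - a)\<bar> / (a * b)"
    using Ap Bp by simp
  also have "\<dots> \<le> G0 * (D * d) / (a * b)"
    using n Ap Bp by (simp add: divide_right_mono)
  also have "\<dots> \<le> G0 * (D * d) / (a * \<gamma>)"
  proof (rule divide_left_mono)
    show "a * \<gamma> \<le> a * b" using Ap B by simp
    show "0 \<le> G0 * (D * d)" using G0 D d by simp
    show "0 < a * b * (a * \<gamma>)" using Ap Bp g by simp
  qed
  finally have t2: "\<bar>gy * (b - a) / (a * b)\<bar> \<le> G0 * (D * d) / (a * \<gamma>)" .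
  have "\<bar>gz / a - gy / b\<bar> \<le> \<bar>(gz - gy) / a\<bar> + \<bar>gy * (b - a) / (a * b)\<bar>"
    unfolding eq by (rule abs_triangle_ineq)
  also have "\<dots> \<le> G1 * d / a + G0 * (D * d) / (a * \<gamma>)"
    using t1 t2 by (rule add_mono)
  also have "\<dots> = (1 / a) * (d * (G1 + G0 * D / \<gamma>))"
    using Ap g by (simp add: field_simps)
  finally show ?thesis .
qed
lemma term_est:
  fixes gz gy A B0 G0 G1 D d \<gamma> :: real
  assumes g: "\<gamma> > 0" and A: "\<bar>A\<bar> \<ge> \<gamma>" and B: "\<bar>B0\<bar> \<ge> \<gamma>"
    and h1: "\<bar>gz - gy\<bar> \<le> G1 * d" and h2: "\<bar>gy\<bar> \<le> G0" and h3: "\<bar>B0 - A\<bar> \<le> D * d"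
    and d: "d \<ge> 0" and D: "D \<ge> 0" and G0: "G0 \<ge> 0"
  shows "\<bar>gz / \<bar>A\<bar> - gy / \<bar>B0\<bar>\<bar> \<le> (1 / \<bar>A\<bar>) * (d * (G1 + G0 * D / \<gamma>))"
proof -
  have "\<bar>\<bar>B0\<bar> - \<bar>A\<bar>\<bar> \<le> D * d" using h3 by linarith
  then show ?thesis by (rule term_est0[OF g A B h1 h2 _ d D G0])
qed

lemma sum_est:
  fixes f0 f1 w :: "real \<Rightarrow> real"
  assumes fin: "finite A0" and bij: "bij_betw \<sigma> A0 A1"
    and h: "\<And>y. y \<in> A0 \<Longrightarrow> \<bar>f1 (\<sigma> y) - f0 y\<bar> \<le> w (\<sigma> y) * K"
    and E: "(\<Sum>z\<in>A1. w z) \<le> E" and K: "K \<ge> 0"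
  shows "\<bar>(\<Sum>z\<in>A1. f1 z) - (\<Sum>y\<in>A0. f0 y)\<bar> \<le> E * K"
proof -
  have r1: "(\<Sum>z\<in>A1. f1 z) = (\<Sum>y\<in>A0. f1 (\<sigma> y))" using sum.reindex_bij_betw[OF bij] by metis
  have r2: "(\<Sum>z\<in>A1. w z) = (\<Sum>y\<in>A0. w (\<sigma> y))" using sum.reindex_bij_betw[OF bij] by metis
  have "\<bar>(\<Sum>z\<in>A1. f1 z) - (\<Sum>y\<in>A0. f0 y)\<bar> = \<bar>\<Sum>y\<in>A0. f1 (\<sigma> y) - f0 y\<bar>"
    unfolding r1 sum_subtractf ..
  also have "\<dots> \<le> (\<Sum>y\<in>A0. \<bar>f1 (\<sigma> y) - f0 y\<bar>)" by (rule sum_abs)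
  also have "\<dots> \<le> (\<Sum>y\<in>A0. w (\<sigma> y) * K)" by (rule sum_mono) (rule h)
  also have "\<dots> = (\<Sum>z\<in>A1. w z) * K" unfolding r2 sum_distrib_right ..
  also have "\<dots> \<le> E * K" using E K by (rule mult_right_mono)
  finally show ?thesis .
qed

lemma distM_bounds:
  assumes "u \<in> {a..b}" "v \<in> {a..b}"
  shows "0 \<le> distM circ u v" "distM circ u v \<le> 1 + (b - a)"
proof -
  have f: "0 \<le> frac (u - v)" "frac (u - v) < 1" by (simp_all add: frac_lt_1)
  show "0 \<le> distM circ u v" unfolding distM_def using f by auto
  show "distM circ u v \<le> 1 + (b - a)" unfolding distM_def using f assms by auto
qed

lemma Mset_between:
  assumes "y \<in> Mset circ a b" "z \<in> Mset circ a b" "min y z \<le> t" "t \<le> max y z"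
  shows "t \<in> Mset circ a b"
  using assms unfolding Mset_def by (cases circ) (auto simp: min_def max_def split: if_splits)

theorem lemma30:
  fixes P :: "'w measure" and circ :: bool and a b \<alpha> \<beta> :: real
    and N :: "'w \<Rightarrow> nat" and c :: "'w \<Rightarrow> nat \<Rightarrow> real"
    and Tb dTb ddTb :: "'w \<Rightarrow> real \<Rightarrow> nat \<Rightarrow> real \<Rightarrow> real"
    and \<gamma> E q :: "'w \<Rightarrow> real"
  defines "M \<equiv> Mset circ a b"
    and "I \<equiv> {\<alpha><..<\<beta>}"
    and "T \<equiv> \<lambda>\<omega> \<epsilon> y. projM circ (glue (N \<omega>) (c \<omega>) (Tb \<omega> \<epsilon>) y)"
    and "T' \<equiv> \<lambda>\<omega> \<epsilon>. glue (N \<omega>) (c \<omega>) (dTb \<omega> \<epsilon>)"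
    and "T'' \<equiv> \<lambda>\<omega>. glue (N \<omega>) (c \<omega>) (ddTb \<omega> 0)"
  assumes "prob_space P"
    and "a < b" and "circ \<Longrightarrow> a = 0 \<and> b = 1"
    and "-1 \<le> \<alpha>" and "\<alpha> < 0" and "0 < \<beta>" and "\<beta> \<le> 1"
    and "E \<in> borel_measurable P" and "q \<in> borel_measurable P"
    and "\<forall>\<omega>\<in>space P. partition_of (N \<omega>) (c \<omega>) a b"
    and "\<forall>\<omega>\<in>space P. \<forall>\<epsilon>\<in>I. branches_C2 (N \<omega>) (c \<omega>) (Tb \<omega> \<epsilon>) (dTb \<omega> \<epsilon>) (ddTb \<omega> \<epsilon>)"
    and "\<forall>\<omega>\<in>space P. \<forall>\<epsilon>\<in>I. \<forall>y\<in>M. T \<omega> \<epsilon> y \<in> M"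
    and "\<forall>\<omega>\<in>space P. \<gamma> \<omega> > 0 \<and> (\<forall>\<epsilon>\<in>I. \<forall>y\<in>M. \<bar>T' \<omega> \<epsilon> y\<bar> \<ge> \<gamma> \<omega>)"
    and "\<forall>\<omega>\<in>space P. \<forall>\<epsilon>\<in>I. supM M (transfer_op M (T \<omega> \<epsilon>) (T' \<omega> \<epsilon>) (\<lambda>_. 1)) \<le> E \<omega>"
    and "\<forall>\<omega>\<in>space P. \<forall>\<epsilon>\<in>I. dC1 circ M (T \<omega> \<epsilon>) (T' \<omega> \<epsilon>) (T \<omega> 0) (T' \<omega> 0) \<le> q \<omega> * \<bar>\<epsilon>\<bar>"
    and "\<forall>\<omega>\<in>space P. \<forall>\<epsilon>\<in>I. \<forall>x\<in>M. \<exists>\<sigma>.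
           bij_betw \<sigma> {y\<in>M. T \<omega> 0 y = x} {y\<in>M. T \<omega> \<epsilon> y = x} \<and>
           (\<forall>y\<in>M. T \<omega> 0 y = x \<longrightarrow>
              bidx (N \<omega>) (c \<omega>) (\<sigma> y) = bidx (N \<omega>) (c \<omega>) y \<and> \<bar>\<sigma> y - y\<bar> \<le> q \<omega> * \<bar>\<epsilon>\<bar>)"
  shows "AE \<omega> in P. \<forall>g g'. C1_fun circ a b g g' \<longrightarrow>
           (\<forall>\<epsilon>\<in>I. supM M (\<lambda>x. transfer_op M (T \<omega> \<epsilon>) (T' \<omega> \<epsilon>) g x
                  - transfer_op M (T \<omega> 0) (T' \<omega> 0) g x)
              \<le> \<bar>\<epsilon>\<bar> * (E \<omega> * q \<omega> * (1 + 1 / \<gamma> \<omega> + (1 / \<gamma> \<omega>) * supM M (T'' \<omega>)))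
                  * C1_norm M g g')"
proof (rule AE_I2)
  fix \<omega> assume \<omega>: "\<omega> \<in> space P"
  have cc: "circ \<longrightarrow> a = 0 \<and> b = 1" using assms(8) by blast
  note Mf = Mset_facts[of a b circ, OF assms(7) cc, folded M_def]
  have p: "partition_of (N \<omega>) (c \<omega>) a b" using assms(15) \<omega> by blast
  have I0: "0 \<in> I" unfolding I_def using assms(10,11) by simp
  have gam: "\<gamma> \<omega> > 0" using assms(18) \<omega> by blast
  have Teq: "T \<omega> \<epsilon> = (\<lambda>y. projM circ (glue (N \<omega>) (c \<omega>) (Tb \<omega> \<epsilon>) y))" for \<epsilon>
    unfolding T_def ..
  have T'eq: "T' \<omega> \<epsilon> = glue (N \<omega>) (c \<omega>) (dTb \<omega> \<epsilon>)" for \<epsilon>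
    unfolding T'_def ..
  have T''eq: "T'' \<omega> = glue (N \<omega>) (c \<omega>) (ddTb \<omega> 0)"
    unfolding T''_def ..
  have Tin: "T \<omega> \<epsilon> y \<in> M" if "\<epsilon> \<in> I" "y \<in> M" for \<epsilon> y
    using assms(17) \<omega> that by blast
  have Tg: "\<bar>T' \<omega> \<epsilon> y\<bar> \<ge> \<gamma> \<omega>" if "\<epsilon> \<in> I" "y \<in> M" for \<epsilon> y
    using assms(18) \<omega> that by blast
  have bC2: "\<forall>k<N \<omega>. (\<forall>y\<in>{c \<omega> k..c \<omega> (Suc k)}.
                (Tb \<omega> \<epsilon> k has_real_derivative dTb \<omega> \<epsilon> k y) (at y within {c \<omega> k..c \<omega> (Suc k)}) \<and>
                (dTb \<omega> \<epsilon> k has_real_derivative ddTb \<omega> \<epsilon> k y) (at y within {c \<omega> k..c \<omega> (Suc k)}))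
            \<and> continuous_on {c \<omega> k..c \<omega> (Suc k)} (ddTb \<omega> \<epsilon> k)" if "\<epsilon> \<in> I" for \<epsilon>
    using assms(16) \<omega> that unfolding branches_C2_def by blast
  have F1: "\<forall>k<N \<omega>. continuous_on {c \<omega> k..c \<omega> (Suc k)} (Tb \<omega> \<epsilon> k)" if "\<epsilon> \<in> I" for \<epsilon>
  proof (intro allI impI)
    fix k assume "k < N \<omega>"
    then show "continuous_on {c \<omega> k..c \<omega> (Suc k)} (Tb \<omega> \<epsilon> k)"
      using bC2[OF that] by (intro DERIV_continuous_on[of _ _ "dTb \<omega> \<epsilon> k"]) blast
  qed
  have F2: "\<forall>k<N \<omega>. continuous_on {c \<omega> k..c \<omega> (Suc k)} (dTb \<omega> \<epsilon> k)" if "\<epsilon> \<in> I" for \<epsilon>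
  proof (intro allI impI)
    fix k assume "k < N \<omega>"
    then show "continuous_on {c \<omega> k..c \<omega> (Suc k)} (dTb \<omega> \<epsilon> k)"
      using bC2[OF that] by (intro DERIV_continuous_on[of _ _ "ddTb \<omega> \<epsilon> k"]) blast
  qed
  have F3: "\<forall>k<N \<omega>. inj_on (Tb \<omega> \<epsilon> k) {c \<omega> k..c \<omega> (Suc k)}" if eI: "\<epsilon> \<in> I" for \<epsilon>
  proof (intro allI impI)
    fix k assume k: "k < N \<omega>"
    show "inj_on (Tb \<omega> \<epsilon> k) {c \<omega> k..c \<omega> (Suc k)}"
    proof (rule branch_inj[OF p k])
      show "\<forall>y\<in>{c \<omega> k..c \<omega> (Suc k)}. (Tb \<omega> \<epsilon> k has_real_derivative dTb \<omega> \<epsilon> k y)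
          (at y within {c \<omega> k..c \<omega> (Suc k)})" using bC2[OF eI] k by blast
      fix y assume y: "c \<omega> k < y" "y < c \<omega> (Suc k)"
      have "c \<omega> 0 \<le> c \<omega> k" using part_mono_le[OF p, of 0 k] k by simp
      moreover have "c \<omega> (Suc k) \<le> c \<omega> (N \<omega>)" using part_mono_le[OF p, of "Suc k" "N \<omega>"] k by simp
      ultimately have "a \<le> y" "y < b" using p y unfolding partition_of_def by auto
      then have yM: "y \<in> M" using Mf(1) by auto
      have "bidx (N \<omega>) (c \<omega>) y = k" using bidx_eq[OF p k] y by simp
      then have "T' \<omega> \<epsilon> y = dTb \<omega> \<epsilon> k y" unfolding T'eq glue_def by simp
      then show "dTb \<omega> \<epsilon> k y \<noteq> 0" using Tg[OF eI yM] gam by auto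
    qed
  qed
  have F4: "\<exists>B. \<forall>x. finite {y\<in>M. T \<omega> \<epsilon> y = x} \<and> card {y\<in>M. T \<omega> \<epsilon> y = x} \<le> B"
    if eI: "\<epsilon> \<in> I" for \<epsilon>
    unfolding Teq using preimage_card[OF p Mf(2) F1[OF eI] F3[OF eI]] .
  have F5: "bounded (transfer_op M (T \<omega> \<epsilon>) (T' \<omega> \<epsilon>) (\<lambda>_. 1) ` M)" if eI: "\<epsilon> \<in> I" for \<epsilon>
  proof -
    obtain B where B: "\<And>x. card {y\<in>M. T \<omega> \<epsilon> y = x} \<le> B" using F4[OF eI] by blast
    have "\<bar>transfer_op M (T \<omega> \<epsilon>) (T' \<omega> \<epsilon>) (\<lambda>_. 1) x\<bar> \<le> real B / \<gamma> \<omega>" for x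
    proof -
      have "\<bar>transfer_op M (T \<omega> \<epsilon>) (T' \<omega> \<epsilon>) (\<lambda>_. 1) x\<bar>
          \<le> (\<Sum>y\<in>{y\<in>M. T \<omega> \<epsilon> y = x}. \<bar>1 / \<bar>T' \<omega> \<epsilon> y\<bar>\<bar>)"
        unfolding transfer_op_def by (rule sum_abs)
      also have "\<dots> \<le> (\<Sum>y\<in>{y\<in>M. T \<omega> \<epsilon> y = x}. 1 / \<gamma> \<omega>)"
      proof (rule sum_mono)
        fix y assume "y \<in> {y\<in>M. T \<omega> \<epsilon> y = x}"
        then have "\<gamma> \<omega> \<le> \<bar>T' \<omega> \<epsilon> y\<bar>" using Tg[OF eI] by blast
        then show "\<bar>1 / \<bar>T' \<omega> \<epsilon> y\<bar>\<bar> \<le> 1 / \<gamma> \<omega>" using gam by (simp add: frac_le)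
      qed
      also have "\<dots> = real (card {y\<in>M. T \<omega> \<epsilon> y = x}) / \<gamma> \<omega>" by simp
      also have "\<dots> \<le> real B / \<gamma> \<omega>" using B[of x] gam by (simp add: divide_right_mono)
      finally show ?thesis .
    qed
    then show ?thesis unfolding bounded_iff by (intro exI[of _ "real B / \<gamma> \<omega>"]) auto
  qed
  have F6: "bounded (T' \<omega> \<epsilon> ` M)" if eI: "\<epsilon> \<in> I" for \<epsilon>
    unfolding T'eq by (rule glue_bounded[OF p Mf(2) F2[OF eI]])
  have F7: "bounded (T'' \<omega> ` M)"
  proof -
    have "\<forall>k<N \<omega>. continuous_on {c \<omega> k..c \<omega> (Suc k)} (ddTb \<omega> 0 k)" using bC2[OF I0] by blast
    then show ?thesis unfolding T''eq by (rule glue_bounded[OF p Mf(2)])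
  qed
  have LE: "transfer_op M (T \<omega> \<epsilon>) (T' \<omega> \<epsilon>) (\<lambda>_. 1) x \<le> E \<omega>"
    "0 \<le> E \<omega>" if eI: "\<epsilon> \<in> I" and x: "x \<in> M" for \<epsilon> x
  proof -
    have "transfer_op M (T \<omega> \<epsilon>) (T' \<omega> \<epsilon>) (\<lambda>_. 1) x \<le> \<bar>transfer_op M (T \<omega> \<epsilon>) (T' \<omega> \<epsilon>) (\<lambda>_. 1) x\<bar>"
      by simp
    also have "\<dots> \<le> supM M (transfer_op M (T \<omega> \<epsilon>) (T' \<omega> \<epsilon>) (\<lambda>_. 1))"
      by (rule supM_upper[OF F5[OF eI] x])
    also have "\<dots> \<le> E \<omega>" using assms(19) \<omega> eI by blast
    finally show "transfer_op M (T \<omega> \<epsilon>) (T' \<omega> \<epsilon>) (\<lambda>_. 1) x \<le> E \<omega>" .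
    have "supM M (transfer_op M (T \<omega> \<epsilon>) (T' \<omega> \<epsilon>) (\<lambda>_. 1)) \<le> E \<omega>"
      using assms(19) \<omega> eI by blast
    then show "0 \<le> E \<omega>" using supM_upper[OF F5[OF eI] x]
      by (meson abs_ge_zero order_trans)
  qed
  have DT: "\<bar>T' \<omega> \<epsilon> z - T' \<omega> 0 z\<bar> \<le> q \<omega> * \<bar>\<epsilon>\<bar>" if eI: "\<epsilon> \<in> I" and z: "z \<in> M" for \<epsilon> z
  proof -
    obtain R1 where R1: "\<forall>u\<in>T' \<omega> \<epsilon> ` M. norm u \<le> R1" using F6[OF eI] bounded_iff by blast
    obtain R0 where R0: "\<forall>u\<in>T' \<omega> 0 ` M. norm u \<le> R0" using F6[OF I0] bounded_iff by blast
    have bd1: "bdd_above ((\<lambda>y. \<bar>T' \<omega> \<epsilon> y - T' \<omega> 0 y\<bar>) ` M)"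
    proof (rule bdd_aboveI[of _ "R1 + R0"])
      fix u assume "u \<in> (\<lambda>y. \<bar>T' \<omega> \<epsilon> y - T' \<omega> 0 y\<bar>) ` M"
      then obtain y where y: "y \<in> M" "u = \<bar>T' \<omega> \<epsilon> y - T' \<omega> 0 y\<bar>" by blast
      have "\<bar>T' \<omega> \<epsilon> y\<bar> \<le> R1" "\<bar>T' \<omega> 0 y\<bar> \<le> R0" using R1 R0 y(1) by auto
      then show "u \<le> R1 + R0" using y(2) by linarith
    qed
    have dist_ok: "0 \<le> distM circ (T \<omega> \<epsilon> y) (T \<omega> 0 y) \<and> distM circ (T \<omega> \<epsilon> y) (T \<omega> 0 y) \<le> 1 + (b - a)"
      if "y \<in> M" for y
    proof -
      have "T \<omega> \<epsilon> y \<in> {a..b}" "T \<omega> 0 y \<in> {a..b}" using Tin[OF eI that] Tin[OF I0 that] Mf(2) by auto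
      then show ?thesis using distM_bounds by blast
    qed
    have bd2: "bdd_above ((\<lambda>y. distM circ (T \<omega> \<epsilon> y) (T \<omega> 0 y)) ` M)"
      using dist_ok by (intro bdd_aboveI[of _ "1 + (b - a)"]) blast
    have s1: "0 \<le> (SUP y\<in>M. distM circ (T \<omega> \<epsilon> y) (T \<omega> 0 y))"
      using cSUP_upper2[OF bd2 z] dist_ok[OF z] by blast
    have s2: "\<bar>T' \<omega> \<epsilon> z - T' \<omega> 0 z\<bar> \<le> (SUP y\<in>M. \<bar>T' \<omega> \<epsilon> y - T' \<omega> 0 y\<bar>)"
      using cSUP_upper[OF z bd1] .
    have "dC1 circ M (T \<omega> \<epsilon>) (T' \<omega> \<epsilon>) (T \<omega> 0) (T' \<omega> 0) \<le> q \<omega> * \<bar>\<epsilon>\<bar>"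
      using assms(20) \<omega> eI by blast
    then show ?thesis using s1 s2 unfolding dC1_def by linarith
  qed
  obtain m where m: "m \<in> M" using Mf(4) by blast
  show "\<forall>g g'. C1_fun circ a b g g' \<longrightarrow>
           (\<forall>\<epsilon>\<in>I. supM M (\<lambda>x. transfer_op M (T \<omega> \<epsilon>) (T' \<omega> \<epsilon>) g x
                  - transfer_op M (T \<omega> 0) (T' \<omega> 0) g x)
              \<le> \<bar>\<epsilon>\<bar> * (E \<omega> * q \<omega> * (1 + 1 / \<gamma> \<omega> + (1 / \<gamma> \<omega>) * supM M (T'' \<omega>)))
                  * C1_norm M g g')"
  proof (intro allI impI ballI)
    fix g g' \<epsilon> assume g: "C1_fun circ a b g g'" and eI: "\<epsilon> \<in> I"
    note gf = C1_facts[of circ a b g g', OF g assms(7) cc, folded M_def]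
    define sg where "sg = supM M g"
    define sg' where "sg' = supM M g'"
    define sT where "sT = supM M (T'' \<omega>)"
    define d where "d = q \<omega> * \<bar>\<epsilon>\<bar>"
    define K where "K = d * (sg' + sg * (sT + 1) / \<gamma> \<omega>)"
    have sg0: "0 \<le> sg" unfolding sg_def by (rule supM_nonneg[OF gf(1) Mf(4)])
    have sg'0: "0 \<le> sg'" unfolding sg'_def by (rule supM_nonneg[OF gf(2) Mf(4)])
    have sT0: "0 \<le> sT" unfolding sT_def by (rule supM_nonneg[OF F7 Mf(4)])
    have d0: "0 \<le> d" unfolding d_def using DT[OF eI m] by linarith
    have K0: "0 \<le> K" unfolding K_def using d0 sg0 sg'0 sT0 gam by simp
    have E0: "0 \<le> E \<omega>" using LE(2)[OF eI m] .
    have pt: "\<bar>transfer_op M (T \<omega> \<epsilon>) (T' \<omega> \<epsilon>) g x - transfer_op M (T \<omega> 0) (T' \<omega> 0) g x\<bar>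
        \<le> E \<omega> * K" if x: "x \<in> M" for x
    proof -
      obtain \<sigma> where bij: "bij_betw \<sigma> {y\<in>M. T \<omega> 0 y = x} {y\<in>M. T \<omega> \<epsilon> y = x}"
        and sp: "\<forall>y\<in>M. T \<omega> 0 y = x \<longrightarrow>
              bidx (N \<omega>) (c \<omega>) (\<sigma> y) = bidx (N \<omega>) (c \<omega>) y \<and> \<bar>\<sigma> y - y\<bar> \<le> q \<omega> * \<bar>\<epsilon>\<bar>"
        using assms(21) \<omega> eI x by blast
      have fin: "finite {y\<in>M. T \<omega> 0 y = x}" using F4[OF I0] by blast
      show ?thesis unfolding transfer_op_def
      proof (rule sum_est[OF fin bij _ _ K0])
        show "(\<Sum>z\<in>{y\<in>M. T \<omega> \<epsilon> y = x}. 1 / \<bar>T' \<omega> \<epsilon> z\<bar>) \<le> E \<omega>"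
          using LE(1)[OF eI x] unfolding transfer_op_def .
        fix y assume yA: "y \<in> {y\<in>M. T \<omega> 0 y = x}"
        then have yM: "y \<in> M" and yT: "T \<omega> 0 y = x" by auto
        have zA: "\<sigma> y \<in> {y\<in>M. T \<omega> \<epsilon> y = x}" using bij yA bij_betwE by blast
        then have zM: "\<sigma> y \<in> M" by blast
        define z where "z = \<sigma> y"
        have bz: "bidx (N \<omega>) (c \<omega>) z = bidx (N \<omega>) (c \<omega>) y" and zy: "\<bar>z - y\<bar> \<le> d"
          using sp yM yT unfolding z_def d_def by auto
        have zM': "z \<in> M" using zM unfolding z_def .
        have h1: "\<bar>g z - g y\<bar> \<le> sg' * d"
        proof -
          have "\<bar>g z - g y\<bar> \<le> sg' * \<bar>z - y\<bar>" unfolding sg'_def by (rule gf(3)[OF zM' yM])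
          also have "\<dots> \<le> sg' * d" using zy sg'0 by (rule mult_left_mono)
          finally show ?thesis .
        qed
        have h2: "\<bar>g y\<bar> \<le> sg" unfolding sg_def by (rule supM_upper[OF gf(1) yM])
        have h3a: "\<bar>T' \<omega> 0 y - T' \<omega> 0 z\<bar> \<le> sT * \<bar>y - z\<bar>"
        proof -
          define k where "k = bidx (N \<omega>) (c \<omega>) y"
          have yab: "a \<le> y" "y \<le> b" and zab: "a \<le> z" "z \<le> b" using yM zM' Mf(2) by auto
          have kz: "bidx (N \<omega>) (c \<omega>) z = k" using bz unfolding k_def .
          define S where "S = {min y z..max y z}"
          have St: "bidx (N \<omega>) (c \<omega>) t = k" "c \<omega> k \<le> t" "t \<le> c \<omega> (Suc k)" "t \<in> M"
            if "t \<in> S" for t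
          proof -
            have tt: "min y z \<le> t" "t \<le> max y z" using that unfolding S_def by auto
            show "bidx (N \<omega>) (c \<omega>) t = k" "c \<omega> k \<le> t" "t \<le> c \<omega> (Suc k)"
              using bidx_between[OF p yab zab k_def[symmetric] kz tt] by auto
            show "t \<in> M" unfolding M_def by (rule Mset_between[OF yM[unfolded M_def] zM'[unfolded M_def] tt])
          qed
          have kN: "k < N \<omega>" using bidx_props(1)[OF p yab] unfolding k_def .
          have Ssub: "S \<subseteq> {c \<omega> k..c \<omega> (Suc k)}" using St(2,3) by auto
          have "norm (dTb \<omega> 0 k y - dTb \<omega> 0 k z) \<le> sT * norm (y - z)"
          proof (rule field_differentiable_bound[of S])
            show "convex S" unfolding S_def by (rule convex_real_interval)
            show "(dTb \<omega> 0 k has_field_derivative ddTb \<omega> 0 k t) (at t within S)" if "t \<in> S" for t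
            proof -
              have "t \<in> {c \<omega> k..c \<omega> (Suc k)}" using St(2,3)[OF that] by simp
              then have "(dTb \<omega> 0 k has_field_derivative ddTb \<omega> 0 k t) (at t within {c \<omega> k..c \<omega> (Suc k)})"
                using bC2[OF I0] kN by blast
              then show ?thesis using DERIV_subset Ssub by blast
            qed
            show "norm (ddTb \<omega> 0 k t) \<le> sT" if "t \<in> S" for t
            proof -
              have "T'' \<omega> t = ddTb \<omega> 0 k t" unfolding T''eq glue_def using St(1)[OF that] by simp
              then show ?thesis using supM_upper[OF F7 St(4)[OF that]] unfolding sT_def by simp
            qed
            show "y \<in> S" "z \<in> S" unfolding S_def by auto
          qed
          moreover have "T' \<omega> 0 y = dTb \<omega> 0 k y" unfolding T'eq glue_def k_def ..
          moreover have "T' \<omega> 0 z = dTb \<omega> 0 k z" unfolding T'eq glue_def kz ..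
          ultimately show ?thesis by simp
        qed
        have h3: "\<bar>T' \<omega> 0 y - T' \<omega> \<epsilon> z\<bar> \<le> (sT + 1) * d"
        proof -
          have "\<bar>T' \<omega> 0 y - T' \<omega> \<epsilon> z\<bar> \<le> \<bar>T' \<omega> 0 y - T' \<omega> 0 z\<bar> + \<bar>T' \<omega> \<epsilon> z - T' \<omega> 0 z\<bar>"
            by linarith
          also have "\<dots> \<le> sT * \<bar>y - z\<bar> + d" using h3a DT[OF eI zM'] unfolding d_def by linarith
          also have "sT * \<bar>y - z\<bar> \<le> sT * d" using zy sT0 by (simp add: abs_minus_commute mult_left_mono)
          finally show ?thesis by (simp add: algebra_simps)
        qed
        have "\<bar>g z / \<bar>T' \<omega> \<epsilon> z\<bar> - g y / \<bar>T' \<omega> 0 y\<bar>\<bar>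
            \<le> (1 / \<bar>T' \<omega> \<epsilon> z\<bar>) * (d * (sg' + sg * (sT + 1) / \<gamma> \<omega>))"
          by (rule term_est[OF gam Tg[OF eI zM'] Tg[OF I0 yM] h1 h2 h3 d0 _ sg0]) (use sT0 in simp)
        then show "\<bar>g (\<sigma> y) / \<bar>T' \<omega> \<epsilon> (\<sigma> y)\<bar> - g y / \<bar>T' \<omega> 0 y\<bar>\<bar> \<le> 1 / \<bar>T' \<omega> \<epsilon> (\<sigma> y)\<bar> * K"
          unfolding K_def z_def .
      qed
    qed
    have fin_ineq: "E \<omega> * K \<le> \<bar>\<epsilon>\<bar> * (E \<omega> * q \<omega> * (1 + 1 / \<gamma> \<omega> + (1 / \<gamma> \<omega>) * sT)) * (sg + sg')"
    proof -
      have eq1: "\<bar>\<epsilon>\<bar> * (E \<omega> * q \<omega> * (1 + 1 / \<gamma> \<omega> + (1 / \<gamma> \<omega>) * sT)) * (sg + sg')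
          = (E \<omega> * d) * ((1 + 1 / \<gamma> \<omega> + (1 / \<gamma> \<omega>) * sT) * (sg + sg'))"
        unfolding d_def by (simp add: mult_ac)
      have eq2: "E \<omega> * K = (E \<omega> * d) * (sg' + sg * (sT + 1) / \<gamma> \<omega>)"
        unfolding K_def by (simp add: mult_ac)
      have eq3: "(1 + 1 / \<gamma> \<omega> + (1 / \<gamma> \<omega>) * sT) * (sg + sg')
          = (sg' + sg * (sT + 1) / \<gamma> \<omega>) + (sg + sg' * (1 + sT) / \<gamma> \<omega>)"
        using gam by (simp add: field_simps)
      have "0 \<le> sg + sg' * (1 + sT) / \<gamma> \<omega>" using sg0 sg'0 sT0 gam by simp
      then have "(sg' + sg * (sT + 1) / \<gamma> \<omega>) \<le> (1 + 1 / \<gamma> \<omega> + (1 / \<gamma> \<omega>) * sT) * (sg + sg')"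
        unfolding eq3 by linarith
      moreover have "0 \<le> E \<omega> * d" using E0 d0 by simp
      ultimately show ?thesis unfolding eq1 eq2 by (rule mult_left_mono)
    qed
    show "supM M (\<lambda>x. transfer_op M (T \<omega> \<epsilon>) (T' \<omega> \<epsilon>) g x - transfer_op M (T \<omega> 0) (T' \<omega> 0) g x)
        \<le> \<bar>\<epsilon>\<bar> * (E \<omega> * q \<omega> * (1 + 1 / \<gamma> \<omega> + 1 / \<gamma> \<omega> * supM M (T'' \<omega>))) * C1_norm M g g'"
    proof (rule supM_least[OF Mf(4)])
      fix x assume "x \<in> M"
      then show "\<bar>transfer_op M (T \<omega> \<epsilon>) (T' \<omega> \<epsilon>) g x - transfer_op M (T \<omega> 0) (T' \<omega> 0) g x\<bar>
          \<le> \<bar>\<epsilon>\<bar> * (E \<omega> * q \<omega> * (1 + 1 / \<gamma> \<omega> + 1 / \<gamma> \<omega> * supM M (T'' \<omega>))) * C1_norm M g g'"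
        using pt fin_ineq unfolding C1_norm_def sT_def sg_def sg'_def by (meson order_trans)
    qed
  qed
qed

end
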